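(* Let $q_0>0$, $\alpha,\beta\in\mathbb{R}$, $\theta_+\in(0,\pi)$ with $\beta\neq2q_0\cos\theta_+$, and $$q(x,t)=q_0e^{i(\alpha t+\beta x)}\Big[\cos\theta_++i\sin\theta_+\tanh\Big(q_0\sin\theta_+\Big(x-\frac{\alpha t}{\beta-2q_0\cos\theta_+}\Big)\Big)\Big].$$ Define $s(x,t)=\int_x^\infty\partial_t\big(q(x',t)q(-x',-t)\big)\,dx'+\frac{\alpha\beta}{2}$. Then $q$ and $s$ are smooth, $q_{xt}+2sq=0$ on $\mathbb{R}^2$, $s_x=-\partial_t\big(q(x,t)q(-x,-t)\big)$, $s(-x,-t)=s(x,t)$, $s(x,t)\to\alpha\beta/2$ as $|x|\to\infty$, and $q(x,t)\to q_0e^{i(\alpha t+\beta x\pm\theta_+)}$ as $x\to\pm\infty$. *)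

theory Defs
  imports "HOL-Analysis.Analysis"
begin

definition partial_x :: "(real \<Rightarrow> real \<Rightarrow> complex) \<Rightarrow> real \<Rightarrow> real \<Rightarrow> complex" where
  "partial_x f x t = vector_derivative (\<lambda>y. f y t) (at x)"

definition partial_t :: "(real \<Rightarrow> real \<Rightarrow> complex) \<Rightarrow> real \<Rightarrow> real \<Rightarrow> complex" where
  "partial_t f x t = vector_derivative (\<lambda>y. f x y) (at t)"

fun iter_partial :: "bool list \<Rightarrow> (real \<Rightarrow> real \<Rightarrow> complex) \<Rightarrow> real \<Rightarrow> real \<Rightarrow> complex" where
  "iter_partial [] f = f"
| "iter_partial (b # bs) f = (if b then partial_x else partial_t) (iter_partial bs f)"

definition smooth2 :: "(real \<Rightarrow> real \<Rightarrow> complex) \<Rightarrow> bool" where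
  "smooth2 f \<longleftrightarrow> (\<forall>ds.
      continuous_on UNIV (\<lambda>(x, t). iter_partial ds f x t) \<and>
      (\<forall>x t. (\<lambda>y. iter_partial ds f y t) differentiable (at x) \<and>
             (\<lambda>y. iter_partial ds f x y) differentiable (at t)))"

end

theory Submission
  imports Defs "HOL-Computational_Algebra.Polynomial"
begin


definition G :: "real \<Rightarrow> real \<Rightarrow> real \<Rightarrow> real \<Rightarrow> complex poly \<Rightarrow> real \<Rightarrow> real \<Rightarrow> complex" where
  "G a b c d p x t = exp (\<i> * of_real (a * t + b * x)) * poly p (of_real (tanh (c * x + d * t)))"

definition sq1 :: "complex poly" where "sq1 = [:1, 0, -1:]"

lemma deriv_gen:
  fixes A B C E :: real
  shows "((\<lambda>y. exp (\<i> * of_real (A + B * y)) * poly p (of_real (tanh (C * y + E)))) has_vector_derivative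
     (exp (\<i> * of_real (A + B * y)) * (\<i> * of_real B * poly p (of_real (tanh (C * y + E)))
       + of_real C * poly (pderiv p * sq1) (of_real (tanh (C * y + E)))))) (at y)"
proof -
  have u: "((\<lambda>y. \<i> * of_real (A + B * y)) has_vector_derivative (\<i> * of_real B)) (at y)"
    by (auto intro!: derivative_eq_intros)
  have e: "((exp \<circ> (\<lambda>y. \<i> * of_real (A + B * y))) has_vector_derivative (\<i> * of_real B) * exp (\<i> * of_real (A + B * y))) (at y)"
    by (rule field_vector_diff_chain_at[OF u]) (rule DERIV_exp)
  have w: "((\<lambda>y. (of_real (tanh (C * y + E)) :: complex)) has_vector_derivative of_real ((1 - tanh (C * y + E) ^ 2) * C)) (at y)"
    by (auto intro!: derivative_eq_intros has_vector_derivative_of_real simp: cosh_real_pos[THEN less_imp_neq, symmetric] )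
  have h: "((poly p \<circ> (\<lambda>y. (of_real (tanh (C * y + E)) :: complex))) has_vector_derivative of_real ((1 - tanh (C * y + E) ^ 2) * C) * poly (pderiv p) (of_real (tanh (C * y + E)))) (at y)"
    by (rule field_vector_diff_chain_at[OF w]) (rule poly_DERIV)
  show ?thesis
    apply (rule has_vector_derivative_eq_rhs[OF has_vector_derivative_mult[OF e h, unfolded o_def]])
    apply (simp add: sq1_def algebra_simps power2_eq_square)
    done
qed

definition Dpol :: "real \<Rightarrow> real \<Rightarrow> complex poly \<Rightarrow> complex poly" where
  "Dpol b c p = smult (\<i> * of_real b) p + smult (of_real c) (pderiv p * sq1)"

lemma G_dx: "((\<lambda>y. G a b c d p y t) has_vector_derivative G a b c d (Dpol b c p) y t) (at y)"
proof -
  have "(\<lambda>y. G a b c d p y t) = (\<lambda>y. exp (\<i> * of_real (a * t + b * y)) * poly p (of_real (tanh (c * y + d * t))))"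
    by (simp add: G_def)
  show ?thesis
    unfolding \<open>_ = _\<close>
    by (rule has_vector_derivative_eq_rhs[OF deriv_gen]) (simp add: G_def Dpol_def algebra_simps)
qed

lemma G_dt: "((\<lambda>y. G a b c d p x y) has_vector_derivative G a b c d (Dpol a d p) x y) (at y)"
proof -
  have "(\<lambda>y. G a b c d p x y) = (\<lambda>y. exp (\<i> * of_real (b * x + a * y)) * poly p (of_real (tanh (d * y + c * x))))"
    by (simp add: G_def algebra_simps)
  show ?thesis
    unfolding \<open>_ = _\<close>
    by (rule has_vector_derivative_eq_rhs[OF deriv_gen]) (simp add: G_def Dpol_def algebra_simps)
qed

lemma px_G: "partial_x (G a b c d p) = G a b c d (Dpol b c p)"
  by (auto simp: partial_x_def fun_eq_iff intro!: vector_derivative_at G_dx)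

lemma pt_G: "partial_t (G a b c d p) = G a b c d (Dpol a d p)"
  by (auto simp: partial_t_def fun_eq_iff intro!: vector_derivative_at G_dt)

lemma iter_G: "\<exists>p'. iter_partial ds (G a b c d p) = G a b c d p'"
  by (induction ds) (auto simp: px_G pt_G)

lemma cont_G: "continuous_on UNIV (\<lambda>(x, t). G a b c d p x t)"
  unfolding G_def case_prod_unfold
  apply (intro continuous_intros)
  using cosh_real_pos by (metis less_irrefl)

lemma smooth_G: "smooth2 (G a b c d p)"
  unfolding smooth2_def
proof (intro allI conjI)
  fix ds x t
  obtain p' where p': "iter_partial ds (G a b c d p) = G a b c d p'" using iter_G by blast
  show "continuous_on UNIV (\<lambda>(x, t). iter_partial ds (G a b c d p) x t)"
    unfolding p' by (rule cont_G)
  show "(\<lambda>y. iter_partial ds (G a b c d p) y t) differentiable at x"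
    unfolding p' using G_dx by (rule differentiableI_vector)
  show "(\<lambda>y. iter_partial ds (G a b c d p) x y) differentiable at t"
    unfolding p' using G_dt by (rule differentiableI_vector)
qed
lemma sq_le1: "-1 < x \<Longrightarrow> x < 1 \<Longrightarrow> (x::real)^2 \<le> 1"
  by (subst abs_square_le_1) auto

lemma lin_top: "(k::real) > 0 \<Longrightarrow> filterlim (\<lambda>y. k * y + e) at_top at_top"
proof -
  assume k: "k > 0"
  have "filterlim (\<lambda>y. e + k * y) at_top at_top"
    by (rule filterlim_tendsto_add_at_top[OF tendsto_const filterlim_tendsto_pos_mult_at_top[OF tendsto_const k filterlim_ident]])
  then show ?thesis by (simp add: add.commute)
qed

lemma lin_bot: "(k::real) > 0 \<Longrightarrow> filterlim (\<lambda>y. k * y + e) at_bot at_bot"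
proof -
  assume k: "k > 0"
  have "filterlim (\<lambda>y. k * y) at_bot at_bot"
    by (rule filterlim_tendsto_pos_mult_at_bot[OF tendsto_const k filterlim_ident])
  then have "filterlim (\<lambda>y. e + k * y) at_bot at_bot"
    by (subst filterlim_tendsto_add_at_bot_iff[OF tendsto_const])
  then show ?thesis by (simp add: add.commute)
qed

lemma tanh_top: "(k::real) > 0 \<Longrightarrow> ((\<lambda>y. tanh (k * y + e)) \<longlongrightarrow> 1) at_top"
  by (rule filterlim_compose[OF tanh_real_at_top lin_top])

lemma tanh_bot: "(k::real) > 0 \<Longrightarrow> ((\<lambda>y. tanh (k * y + e)) \<longlongrightarrow> -1) at_bot"
  by (rule filterlim_compose[OF tanh_real_at_bot lin_bot])

lemma ftc_inf:
  fixes h H :: "real \<Rightarrow> real"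
  assumes d: "\<And>y. (H has_real_derivative h y) (at y)"
    and nn: "\<And>y. h y \<ge> 0"
    and lim: "(H \<longlongrightarrow> L) at_top"
  shows "(h has_integral (L - H a)) {a..}"
proof (rule has_integral_to_inf)
  have hi: "(h has_integral (H y - H a)) {a..y}" if "a \<le> y" for y
    using that d
    by (intro fundamental_theorem_of_calculus)
       (auto simp: has_real_derivative_iff_has_vector_derivative[symmetric] intro: DERIV_subset)
  show "h integrable_on {a..y}" for y
    by (cases "a \<le> y") (use hi in auto)
  have "\<forall>\<^sub>F y in at_top. H y - H a = integral {a..y} h"
    using eventually_ge_at_top[of a] by eventually_elim (metis hi integral_unique)
  moreover have "((\<lambda>y. H y - H a) \<longlongrightarrow> L - H a) at_top"
    by (intro tendsto_intros lim)
  ultimately show "((\<lambda>y. integral {a..y} h) \<longlongrightarrow> L - H a) at_top"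
    by (rule Lim_transform_eventually[rotated])
qed (use nn in auto)

lemma key_int:
  fixes k e K a :: real
  assumes k: "k > 0"
  shows "((\<lambda>y. K * (tanh (k*y+e) * (1 - tanh (k*y+e)^2))) has_integral
           (K * (1 - tanh (k*a+e)^2) / (2*k))) {a..}"
proof -
  have cz: "cosh (k*y+e) \<noteq> 0" for y using cosh_real_pos[of "k*y+e"] by linarith
  have i1: "((\<lambda>y. (1 + tanh (k*y+e)) * (1 - tanh (k*y+e)^2)) has_integral
      (3/(2*k) - (tanh (k*a+e) + tanh (k*a+e)^2/2)/k)) {a..}"
  proof (rule ftc_inf)
    show "((\<lambda>y. (tanh (k*y+e) + tanh (k*y+e)^2/2)/k) has_real_derivative (1 + tanh (k*y+e)) * (1 - tanh (k*y+e)^2)) (at y)" for y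
      using k cz by (auto intro!: derivative_eq_intros simp: field_simps power2_eq_square)
    show "0 \<le> (1 + tanh (k*y+e)) * (1 - tanh (k*y+e)^2)" for y
      using tanh_real_bounds[of "k*y+e"] by (intro mult_nonneg_nonneg) (auto dest: sq_le1)
    show "((\<lambda>y. (tanh (k*y+e) + tanh (k*y+e)^2/2)/k) \<longlongrightarrow> 3/(2*k)) at_top"
    proof -
      have "((\<lambda>y. (tanh (k*y+e) + tanh (k*y+e)^2/2)/k) \<longlongrightarrow> (1 + 1^2/2)/k) at_top"
        by (intro tendsto_intros tanh_top k) (use k in auto)
      then show ?thesis by simp
    qed
  qed
  have i2: "((\<lambda>y. 1 - tanh (k*y+e)^2) has_integral (1/k - tanh (k*a+e)/k)) {a..}"
  proof (rule ftc_inf)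
    show "((\<lambda>y. tanh (k*y+e)/k) has_real_derivative 1 - tanh (k*y+e)^2) (at y)" for y
      using k cz by (auto intro!: derivative_eq_intros simp: field_simps power2_eq_square)
    show "0 \<le> 1 - tanh (k*y+e)^2" for y
      using tanh_real_bounds[of "k*y+e"] by (auto dest: sq_le1)
    show "((\<lambda>y. tanh (k*y+e)/k) \<longlongrightarrow> 1/k) at_top"
      by (intro tendsto_intros tanh_top k) (use k in auto)
  qed
  have "((\<lambda>y. K * ((1 + tanh (k*y+e)) * (1 - tanh (k*y+e)^2) - (1 - tanh (k*y+e)^2))) has_integral
     K * ((3/(2*k) - (tanh (k*a+e) + tanh (k*a+e)^2/2)/k) - (1/k - tanh (k*a+e)/k))) {a..}"
    by (intro has_integral_mult_right has_integral_diff i1 i2)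
  moreover have "K * ((3/(2*k) - (tanh (k*a+e) + tanh (k*a+e)^2/2)/k) - (1/k - tanh (k*a+e)/k)) = K * (1 - tanh (k*a+e)^2) / (2*k)"
    using k by (simp add: field_simps power2_eq_square)
  ultimately show ?thesis
    by (simp add: algebra_simps)
qed


lemma key_alg:
  fixes a b k dd q0 C S z :: complex
  assumes "k = q0*S" "dd*(b - 2*q0*C) = -(k*a)" "\<i>*\<i> = -1"
  shows "\<i>*a*(\<i>*b*(q0*C + \<i>*q0*S*z) + k*(\<i>*q0*S)*(1-z*z)) + dd*(\<i>*b*(\<i>*q0*S) + k*(\<i>*q0*S)*(-2*z))*(1-z*z)
     + 2*(a*b/2 + dd*k*(1-z*z))*(q0*C + \<i>*q0*S*z) = 0"
  using assms by algebra

theorem mainTheorem13: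
  fixes q0 \<alpha> \<beta> \<theta> :: real
    and q P s :: "real \<Rightarrow> real \<Rightarrow> complex"
  assumes q0_pos: "q0 > 0"
    and theta: "0 < \<theta>" "\<theta> < pi"
    and beta: "\<beta> \<noteq> 2 * q0 * cos \<theta>"
    and q_def: "q = (\<lambda>x t. of_real q0 * exp (\<i> * of_real (\<alpha> * t + \<beta> * x)) *
                  (of_real (cos \<theta>) + \<i> * of_real (sin \<theta>) *
                   of_real (tanh (q0 * sin \<theta> * (x - \<alpha> * t / (\<beta> - 2 * q0 * cos \<theta>))))))"
    and P_def: "P = (\<lambda>x t. q x t * q (- x) (- t))"
    and s_def: "s = (\<lambda>x t. integral {x..} (\<lambda>y. partial_t P y t) + of_real (\<alpha> * \<beta> / 2))"
  shows "(\<forall>x t. (\<lambda>y. partial_t P y t) integrable_on {x..})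
    \<and> smooth2 q \<and> smooth2 s
    \<and> (\<forall>x t. partial_t (partial_x q) x t + 2 * s x t * q x t = 0)
    \<and> (\<forall>x t. partial_x s x t = - partial_t P x t)
    \<and> (\<forall>x t. s (- x) (- t) = s x t)
    \<and> (\<forall>t. ((\<lambda>x. s x t) \<longlongrightarrow> of_real (\<alpha> * \<beta> / 2)) at_infinity)
    \<and> (\<forall>t. ((\<lambda>x. q x t - of_real q0 * exp (\<i> * of_real (\<alpha> * t + \<beta> * x + \<theta>))) \<longlongrightarrow> 0) at_top)
    \<and> (\<forall>t. ((\<lambda>x. q x t - of_real q0 * exp (\<i> * of_real (\<alpha> * t + \<beta> * x - \<theta>))) \<longlongrightarrow> 0) at_bot)"
proof -
  define S where "S = sin \<theta>"
  define C where "C = cos \<theta>"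
  define k where "k = q0 * S"
  define D where "D = \<beta> - 2*q0*C"
  define dd where "dd = -(k*\<alpha>/D)"
  have S_pos: "S > 0" using theta sin_gt_zero by (simp add: S_def)
  have k_pos: "k > 0" using q0_pos S_pos by (simp add: k_def)
  have D_nz: "D \<noteq> 0" using beta by (simp add: D_def C_def)
  define pq where "pq = [:complex_of_real (q0*C), \<i> * complex_of_real (q0*S):]"
  have targ: "q0 * sin \<theta> * (x - \<alpha>*t/(\<beta> - 2*q0*cos \<theta>)) = k*x + dd*t" for x t
    using D_nz by (simp add: k_def dd_def D_def S_def C_def field_simps)
  have q_G: "q = G \<alpha> \<beta> k dd pq"
    unfolding q_def
    by (intro ext) (simp only: targ; simp add: G_def pq_def algebra_simps flip: S_def C_def)
  have tneg: "tanh (k*(-x)+dd*(-t)) = - tanh (k*x+dd*t)" for x t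
    by (metis tanh_minus minus_add_distrib mult_minus_right)
  have tneg2: "tanh (- (k*x) - dd*t) = - tanh (k*x+dd*t)" for x t
    by (metis tanh_minus minus_add_distrib diff_conv_add_uminus)
  have eneg: "exp (\<i> * complex_of_real (\<alpha>*(-t)+\<beta>*(-x))) * exp (\<i> * complex_of_real (\<alpha>*t+\<beta>*x)) = 1" for x t
    by (simp add: exp_add[symmetric] algebra_simps)
  define pP where "pP = [:complex_of_real (q0^2*C^2), 0, complex_of_real (q0^2*S^2):]"
  have P_G: "P = G 0 0 k dd pP"
  proof (intro ext)
    fix x t
    have "P x t = (exp (\<i> * complex_of_real (\<alpha>*(-t)+\<beta>*(-x))) * exp (\<i> * complex_of_real (\<alpha>*t+\<beta>*x)))
       * (poly pq (of_real (tanh (k*x+dd*t))) * poly pq (- of_real (tanh (k*x+dd*t))))"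
      by (simp add: P_def q_G G_def tneg tneg2 mult_ac)
    also have "\<dots> = poly pq (of_real (tanh (k*x+dd*t))) * poly pq (- of_real (tanh (k*x+dd*t)))"
      by (simp only: eneg mult_1_left)
    also have "\<dots> = G 0 0 k dd pP x t"
      by (simp add: G_def pq_def pP_def algebra_simps power2_eq_square)
    finally show "P x t = G 0 0 k dd pP x t" .
  qed
  define K where "K = 2*dd*q0^2*S^2"
  have dP: "partial_t P y t = complex_of_real (K * (tanh (k*y+dd*t) * (1 - tanh (k*y+dd*t)^2)))" for y t
    by (simp add: P_G pt_G G_def Dpol_def pP_def sq1_def K_def pderiv_pCons algebra_simps power2_eq_square)
  have hasint: "((\<lambda>y. partial_t P y t) has_integral
      complex_of_real (K * (1 - tanh (k*x+dd*t)^2) / (2*k))) {x..}" for x t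
    unfolding dP by (rule has_integral_of_real[OF key_int[OF k_pos]])
  have intg: "(\<lambda>y. partial_t P y t) integrable_on {x..}" for x t
    using hasint by blast
  define ps where "ps = [:complex_of_real (\<alpha>*\<beta>/2 + dd*k), 0, - complex_of_real (dd*k):]"
  have s_G: "s = G 0 0 k dd ps"
  proof (intro ext)
    fix x t
    have "K / (2*k) = dd*k" using k_pos by (simp add: K_def k_def power2_eq_square field_simps)
    then have "K * (1 - tanh (k*x+dd*t)^2) / (2*k) = dd*k*(1 - tanh (k*x+dd*t)^2)"
      by (metis times_divide_eq_right mult.commute)
    then have "s x t = complex_of_real (dd*k*(1 - tanh (k*x+dd*t)^2)) + complex_of_real (\<alpha>*\<beta>/2)"
      by (simp only: s_def integral_unique[OF hasint])
    then show "s x t = G 0 0 k dd ps x t"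
      by (simp add: G_def ps_def algebra_simps power2_eq_square)
  qed
  have h1: "complex_of_real k = complex_of_real q0 * complex_of_real S"
    by (simp add: k_def)
  have h2: "complex_of_real dd * (complex_of_real \<beta> - 2 * complex_of_real q0 * complex_of_real C) = - (complex_of_real k * complex_of_real \<alpha>)"
  proof -
    have "dd * (\<beta> - 2*q0*C) = -(k*\<alpha>)" using D_nz by (simp add: dd_def D_def[symmetric])
    then have "complex_of_real (dd * (\<beta> - 2*q0*C)) = complex_of_real (-(k*\<alpha>))" by simp
    then show ?thesis by simp
  qed
  have h3: "\<i> * \<i> = (-1::complex)" by simp
  have pid: "poly (Dpol \<alpha> dd (Dpol \<beta> k pq)) z + 2 * poly ps z * poly pq z = 0" for z
    by (simp add: Dpol_def pq_def ps_def sq1_def pderiv_pCons algebra_simps) (insert h1 h2 h3, algebra)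
  have pde: "partial_t (partial_x q) x t + 2 * s x t * q x t = 0" for x t
  proof -
    have "partial_t (partial_x q) x t + 2 * s x t * q x t =
      exp (\<i> * complex_of_real (\<alpha> * t + \<beta> * x)) *
      (poly (Dpol \<alpha> dd (Dpol \<beta> k pq)) (of_real (tanh (k*x+dd*t))) + 2 * poly ps (of_real (tanh (k*x+dd*t))) * poly pq (of_real (tanh (k*x+dd*t))))"
      by (simp add: q_G s_G px_G pt_G G_def algebra_simps)
    then show ?thesis by (simp only: pid mult_zero_right)
  qed
  have sx: "partial_x s x t = - partial_t P x t" for x t
    by (simp add: s_G P_G px_G pt_G G_def Dpol_def ps_def pP_def sq1_def pderiv_pCons algebra_simps) (insert h1 h2 h3, algebra)
  have tneg3: "tanh (- a - b) = - tanh (a + b)" for a b :: real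
    by (metis tanh_minus minus_add_distrib diff_conv_add_uminus)
  have ssym: "s (- x) (- t) = s x t" for x t
    by (simp add: s_G G_def ps_def tneg tneg2 tneg3 algebra_simps)
  have s_real: "s x t = complex_of_real (\<alpha>*\<beta>/2 + dd*k*(1 - tanh (k*x+dd*t)^2))" for x t
    by (simp add: s_G G_def ps_def algebra_simps power2_eq_square)
  have slim: "((\<lambda>x. s x t) \<longlongrightarrow> of_real (\<alpha> * \<beta> / 2)) at_infinity" for t
  proof -
    have a: "((\<lambda>x. \<alpha>*\<beta>/2 + dd*k*(1 - tanh (k*x+dd*t)^2)) \<longlongrightarrow> \<alpha>*\<beta>/2 + dd*k*(1 - 1^2)) at_top"
      by (intro tendsto_intros tanh_top k_pos)
    have b: "((\<lambda>x. \<alpha>*\<beta>/2 + dd*k*(1 - tanh (k*x+dd*t)^2)) \<longlongrightarrow> \<alpha>*\<beta>/2 + dd*k*(1 - (-1)^2)) at_bot"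
      by (intro tendsto_intros tanh_bot k_pos)
    have "((\<lambda>x. \<alpha>*\<beta>/2 + dd*k*(1 - tanh (k*x+dd*t)^2)) \<longlongrightarrow> \<alpha>*\<beta>/2) at_infinity"
      unfolding at_infinity_eq_at_top_bot using a b by (intro filterlim_sup) simp_all
    then show ?thesis unfolding s_real by (rule tendsto_of_real)
  qed
  have cisE: "exp (\<i> * complex_of_real (a + b)) = exp (\<i> * complex_of_real a) * (complex_of_real (cos b) + \<i> * complex_of_real (sin b))" for a b
  proof -
    have "cis b = complex_of_real (cos b) + \<i> * complex_of_real (sin b)" by (simp add: complex_eq_iff)
    then show ?thesis by (simp add: cis_conv_exp distrib_left exp_add)
  qed
  have nm1: "norm (complex_of_real r - 1) = \<bar>r - 1\<bar>" for r
    by (metis norm_of_real of_real_1 of_real_diff)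
  have nm2: "norm (complex_of_real r + 1) = \<bar>r + 1\<bar>" for r
    by (metis norm_of_real of_real_1 of_real_add)
  have qtop: "((\<lambda>x. q x t - of_real q0 * exp (\<i> * of_real (\<alpha> * t + \<beta> * x + \<theta>))) \<longlongrightarrow> 0) at_top" for t
  proof (rule tendsto_norm_zero_cancel)
    have eq: "norm (q x t - of_real q0 * exp (\<i> * of_real (\<alpha> * t + \<beta> * x + \<theta>))) = q0 * S * \<bar>tanh (k*x+dd*t) - 1\<bar>" for x
    proof -
      have "q x t - of_real q0 * exp (\<i> * of_real (\<alpha> * t + \<beta> * x + \<theta>)) =
         exp (\<i> * of_real (\<alpha> * t + \<beta> * x)) * (\<i> * complex_of_real (q0 * S * (tanh (k*x+dd*t) - 1)))"
        using cisE[of "\<alpha> * t + \<beta> * x" "\<theta>"]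
        by (simp add: q_G G_def pq_def S_def C_def algebra_simps)
      then show ?thesis using q0_pos S_pos by (simp add: norm_mult abs_mult nm1 nm2)
    qed
    have "((\<lambda>x. q0 * S * \<bar>tanh (k*x+dd*t) - 1\<bar>) \<longlongrightarrow> q0 * S * \<bar>1 - 1\<bar>) at_top"
      by (intro tendsto_intros tanh_top k_pos)
    then show "((\<lambda>x. norm (q x t - of_real q0 * exp (\<i> * of_real (\<alpha> * t + \<beta> * x + \<theta>)))) \<longlongrightarrow> 0) at_top"
      unfolding eq by simp
  qed
  have qbot: "((\<lambda>x. q x t - of_real q0 * exp (\<i> * of_real (\<alpha> * t + \<beta> * x - \<theta>))) \<longlongrightarrow> 0) at_bot" for t
  proof (rule tendsto_norm_zero_cancel)
    have eq: "norm (q x t - of_real q0 * exp (\<i> * of_real (\<alpha> * t + \<beta> * x - \<theta>))) = q0 * S * \<bar>tanh (k*x+dd*t) + 1\<bar>" for x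
    proof -
      have "q x t - of_real q0 * exp (\<i> * of_real (\<alpha> * t + \<beta> * x - \<theta>)) =
         exp (\<i> * of_real (\<alpha> * t + \<beta> * x)) * (\<i> * complex_of_real (q0 * S * (tanh (k*x+dd*t) + 1)))"
      proof -
        have ce: "exp (\<i> * of_real (\<alpha> * t + \<beta> * x - \<theta>)) = exp (\<i> * of_real (\<alpha> * t + \<beta> * x)) * (of_real (cos \<theta>) - \<i> * of_real (sin \<theta>))"
          using cisE[of "\<alpha> * t + \<beta> * x" "-\<theta>"] by simp
        show ?thesis unfolding ce
          by (simp add: q_G G_def pq_def S_def C_def algebra_simps)
      qed
      then show ?thesis using q0_pos S_pos by (simp add: norm_mult abs_mult nm1 nm2)
    qed
    have "((\<lambda>x. q0 * S * \<bar>tanh (k*x+dd*t) + 1\<bar>) \<longlongrightarrow> q0 * S * \<bar>-1 + 1\<bar>) at_bot"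
      by (intro tendsto_intros tanh_bot k_pos)
    then show "((\<lambda>x. norm (q x t - of_real q0 * exp (\<i> * of_real (\<alpha> * t + \<beta> * x - \<theta>)))) \<longlongrightarrow> 0) at_bot"
      unfolding eq by simp
  qed
  have sq: "smooth2 q" unfolding q_G by (rule smooth_G)
  have ss: "smooth2 s" unfolding s_G by (rule smooth_G)
  show ?thesis
    using intg pde sx ssym slim qtop qbot sq ss by blast
qed


end
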